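(* For every integer $n\ge 3$, $$Kf(M_n)=\frac{n^{3}-n}{6}+2n\sum_{i=1}^{n}\frac{1}{\beta_{i}},$$ where $\beta_1,\dots,\beta_n$ are the eigenvalues (counted with multiplicity) of the $n\times n$ matrix $L_S$, and all of them are positive.
   Context: For an integer $n\ge 3$, the Möbius polyomino network $M_n$ is the graph with vertex set $\{1,\dots,n\}\cup\{1',\dots,n'\}$ whose edges are $\{i,i+1\}$ and $\{i',(i+1)'\}$ for $1\le i\le n-1$, $\{i,i'\}$ for $1\le i\le n$, and the two edges $\{1,n'\}$ and $\{1',n\}$. It has $2n$ vertices and $3n$ edges, and every vertex has degree $3$. The Kirchhoff index of a connected graph $G$ is $Kf(G)=\sum_{i<j}r_{ij}$, where $r_{ij}$ is the resistance distance between vertices $i$ and $j$; equivalently $Kf(G)=N\sum_{k=2}^{N}1/\mu_k$, where $N=|V(G)|$ and $0=\mu_1<\mu_2\le\dots\le\mu_N$ are the Laplacian eigenvalues of $G$ (Laplacian $L=D-A$). $L_S$ denotes the $n\times n$ matrix with all diagonal entries equal to $4$, entries $(i,i+1)$ and $(i+1,i)$ equal to $-1$ for $1\le i\le n-1$, entries $(1,n)$ and $(n,1)$ equal to $+1$, and all other entries $0$. *)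

theory Defs
  imports "Jordan_Normal_Form.Char_Poly"
begin

(* Vertex encoding (0-based): unprimed vertex i (1<=i<=n) is i-1,
   primed vertex i' is n+i-1.  Vertex set {0..<2n}. *)
definition mobius_edges :: "nat \<Rightarrow> nat set set" where
  "mobius_edges n =
     {{i, i+1} | i. i + 1 < n}
   \<union> {{n+i, n+i+1} | i. i + 1 < n}
   \<union> {{i, n+i} | i. i < n}
   \<union> {{0, 2*n - 1}, {n, n - 1}}"

definition mobius_adj :: "nat \<Rightarrow> nat \<Rightarrow> nat \<Rightarrow> bool" where
  "mobius_adj n u v \<longleftrightarrow> u \<noteq> v \<and> {u, v} \<in> mobius_edges n"

definition mobius_laplacian :: "nat \<Rightarrow> real mat" where
  "mobius_laplacian n = mat (2*n) (2*n) (\<lambda>(u,v).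
     if u = v then real (card {w. w < 2*n \<and> mobius_adj n u w})
     else if mobius_adj n u v then -1 else 0)"

definition sorted_eigenvalues :: "real mat \<Rightarrow> real list" where
  "sorted_eigenvalues A = (THE mus. sorted mus \<and> length mus = dim_row A \<and>
      char_poly A = (\<Prod>m\<leftarrow>mus. [:-m, 1:]))"

definition kirchhoff_index :: "real mat \<Rightarrow> real" where
  "kirchhoff_index L = real (dim_row L) *
      (\<Sum>m\<leftarrow>tl (sorted_eigenvalues L). 1 / m)"

definition L_S :: "nat \<Rightarrow> real mat" where
  "L_S n = mat n n (\<lambda>(i,j).
     if i = j then 4
     else if j = i + 1 \<or> i = j + 1 then -1
     else if (i = 0 \<and> j = n - 1) \<or> (i = n - 1 \<and> j = 0) then 1
     else 0)"

end

theory Submission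
  imports Defs
begin
lemma prod_linear_mset:
  fixes xs ys :: "'a::idom list"
  assumes "(\<Prod>x\<leftarrow>xs. [:-x,1:]) = (\<Prod>x\<leftarrow>ys. [:-x,1:])"
  shows "mset xs = mset ys"
proof -
  have c: "count (mset zs) a = order a (\<Prod>x\<leftarrow>zs. [:-x,1:])" for zs :: "'a list" and a
  proof (induct zs)
    case Nil then show ?case by (simp add: order_0I)
  next
    case (Cons z zs)
    have nz: "(\<Prod>x\<leftarrow>zs. [:-x,1:]) \<noteq> 0" by (auto simp add: prod_list_zero_iff)
    have "order a ([:-z,1:] * (\<Prod>x\<leftarrow>zs. [:-x,1:])) = order a [:-z,1:] + order a (\<Prod>x\<leftarrow>zs. [:-x,1:])"
      by (intro order_mult no_zero_divisors nz) simp
    moreover have "order a [:-z,1:] = (if z = a then 1 else 0)" using order_linear'[of a "-z"] by auto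
    ultimately show ?case using Cons by simp
  qed
  show ?thesis by (rule multiset_eqI) (simp add: c assms)
qed

lemma sorted_eig:
  assumes "A \<in> carrier_mat m m" "length xs = m" "char_poly A = (\<Prod>x\<leftarrow>xs. [:-x,1:])"
  shows "sorted_eigenvalues A = sort xs"
  unfolding sorted_eigenvalues_def
proof (rule the_equality)
  have "(\<Prod>x\<leftarrow>sort xs. [:-x,1:]) = (\<Prod>x\<leftarrow>xs. [:-x,1:])"
    by (simp only: prod_mset_prod_list[symmetric] mset_map mset_sort)
  then show "sorted (sort xs) \<and> length (sort xs) = dim_row A \<and> char_poly A = (\<Prod>m\<leftarrow>sort xs. [:- m, 1:])"
    using assms by simp
next
  fix ys assume *: "sorted ys \<and> length ys = dim_row A \<and> char_poly A = (\<Prod>m\<leftarrow>ys. [:- m, 1:])"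
  show "ys = sort xs"
  proof -
    have "mset ys = mset xs" using prod_linear_mset[of ys xs] assms * by simp
    then show ?thesis using properties_for_sort[of ys xs] * by simp
  qed
qed

interpretation cr: map_poly_inj_idom_hom "complex_of_real" ..

definition dmat :: "nat \<Rightarrow> (nat \<Rightarrow> 'a::zero) \<Rightarrow> 'a mat" where
  "dmat n d = mat n n (\<lambda>(i,j). if i = j then d i else 0)"

lemma char_poly_diag_sim:
  fixes A F G :: "complex mat"
  assumes A: "A \<in> carrier_mat n n" and F: "F \<in> carrier_mat n n" and G: "G \<in> carrier_mat n n"
    and GF: "G * F = 1\<^sub>m n" and AF: "A * F = F * dmat n d"
  shows "char_poly A = (\<Prod>k\<leftarrow>[0..<n]. [:-d k,1:])"
proof -
  have FG: "F * G = 1\<^sub>m n" by (rule mat_mult_left_right_inverse[OF G F GF])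
  have D: "dmat n d \<in> carrier_mat n n" by (simp add: dmat_def)
  have "A = A * (F * G)" using A FG by simp
  also have "\<dots> = (A * F) * G" using A F G by (simp add: assoc_mult_mat)
  also have "\<dots> = F * dmat n d * G" using AF by simp
  finally have "similar_mat A (dmat n d)"
    using similar_matI[of A "dmat n d" F G n] FG GF A F G D by auto
  then have "char_poly A = char_poly (dmat n d)" by (rule char_poly_similar)
  also have "\<dots> = (\<Prod>a\<leftarrow>diag_mat (dmat n d). [:- a, 1:])"
    by (rule char_poly_upper_triangular[OF D]) (auto simp: upper_triangular_def dmat_def)
  also have "diag_mat (dmat n d) = map d [0..<n]"
    by (rule nth_equalityI) (auto simp: diag_mat_def dmat_def)
  finally show ?thesis by (simp add: o_def)
qed

lemma char_poly_real:
  fixes A :: "real mat"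
  assumes A: "A \<in> carrier_mat n n"
    and h: "char_poly (map_mat complex_of_real A) = (\<Prod>k\<leftarrow>[0..<n]. [:-complex_of_real (r k),1:])"
  shows "char_poly A = (\<Prod>k\<leftarrow>[0..<n]. [:-r k,1:])"
proof -
  have "map_poly complex_of_real (char_poly A) = char_poly (map_mat complex_of_real A)"
    by (rule of_real_hom.char_poly_hom[OF A, symmetric])
  also have "\<dots> = map_poly complex_of_real (\<Prod>k\<leftarrow>[0..<n]. [:-r k,1:])"
    unfolding h cr.hom_prod_list by (simp add: o_def)
  finally show ?thesis by (rule cr.injectivity)
qed

lemma orth:
  fixes n :: nat and m :: int
  assumes n: "n > 0" and m: "\<bar>m\<bar> < int n"
  shows "(\<Sum>l<n. cis (real l * (2 * pi * of_int m / real n))) = (if m = 0 then of_nat n else 0)"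
proof (cases "m = 0")
  case True then show ?thesis by simp
next
  case False
  define \<omega> where "\<omega> = cis (2 * pi * of_int m / real n)"
  have ne: "\<omega> \<noteq> 1"
  proof
    assume "\<omega> = 1"
    then obtain k :: int where "2 * pi * of_int m / real n = of_int k * 2 * pi"
      by (auto simp: \<omega>_def complex_eq_iff cos_one_2pi_int)
    with n have "of_int m = real n * of_int k" by (simp add: field_simps)
    then have "m = int n * k" by (metis of_int_eq_iff of_int_mult of_int_of_nat_eq)
    then have mk: "m = int n * k" .
    with False have "k \<noteq> 0" by auto
    then have "1 \<le> \<bar>k\<bar>" by simp
    then have "int n * 1 \<le> int n * \<bar>k\<bar>" by (intro mult_left_mono) auto
    moreover have "\<bar>m\<bar> = int n * \<bar>k\<bar>" using mk by (simp add: abs_mult)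
    ultimately show False using m by simp
  qed
  have "(\<Sum>l<n. cis (real l * (2 * pi * of_int m / real n))) = (\<Sum>l<n. \<omega> ^ l)"
    by (simp add: \<omega>_def DeMoivre)
  also have "\<dots> = (\<omega> ^ n - 1) / (\<omega> - 1)" by (rule geometric_sum[OF ne])
  also have "\<omega> ^ n = cis (2 * pi * of_int m)" using n by (simp add: \<omega>_def DeMoivre)
  also have "\<dots> = 1" by (rule cis_multiple_2pi) simp
  finally show ?thesis using False by simp
qed

definition tmat :: "nat \<Rightarrow> real \<Rightarrow> real \<Rightarrow> real mat" where
  "tmat n c s = mat n n (\<lambda>(i,j). if i = j then c else if j = i + 1 \<or> i = j + 1 then -1
     else if (i = 0 \<and> j = n - 1) \<or> (i = n - 1 \<and> j = 0) then -s else 0)"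

lemma tmat_carrier[simp]: "tmat n c s \<in> carrier_mat n n" by (simp add: tmat_def)

lemma tmat_sym: "i < n \<Longrightarrow> j < n \<Longrightarrow> tmat n c s $$ (i,j) = tmat n c s $$ (j,i)"
  by (auto simp: tmat_def)

lemma tmat_row:
  fixes x :: "nat \<Rightarrow> 'a::real_algebra_1"
  assumes n: "n \<ge> 3" and j: "j < n"
  shows "(\<Sum>l<n. of_real (tmat n c s $$ (j,l)) * x l) =
    of_real c * x j - of_real (if j + 1 < n then 1 else s) * x (if j + 1 < n then j + 1 else 0)
    - of_real (if 0 < j then 1 else s) * x (if 0 < j then j - 1 else n - 1)"
proof -
  define p where "p = (if j + 1 < n then j + 1 else 0)"
  define q where "q = (if 0 < j then j - 1 else n - 1)"
  define sp where "sp = (if j + 1 < n then 1 else s)"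
  define sq where "sq = (if 0 < j then 1 else s)"
  have pn: "p < n" "q < n" using n j by (auto simp: p_def q_def)
  have dist: "p \<noteq> j" "q \<noteq> j" "p \<noteq> q" using n j by (auto simp: p_def q_def)
  have e: "tmat n c s $$ (j,l) = (if l = j then c else 0) - (if l = p then sp else 0) - (if l = q then sq else 0)"
    if l: "l < n" for l
  proof -
    have E: "tmat n c s $$ (j,l) = (if j = l then c else if l = j + 1 \<or> j = l + 1 then -1
     else if (j = 0 \<and> l = n - 1) \<or> (j = n - 1 \<and> l = 0) then -s else 0)"
      using j l by (simp add: tmat_def)
    consider "l = j" | "l = p" | "l = q" | "l \<noteq> j" "l \<noteq> p" "l \<noteq> q" by blast
    then show ?thesis
    proof cases
      case 1 then show ?thesis using E dist by simp
    next
      case 2 then show ?thesis using E dist n j unfolding p_def sp_def by (cases "j + 1 < n") auto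
    next
      case 3 then show ?thesis using E dist n j unfolding q_def sq_def by (cases "0 < j") auto
    next
      case 4
      have "l \<noteq> j + 1" using 4 l unfolding p_def by (cases "j + 1 < n") auto
      moreover have "j \<noteq> l + 1" using 4 unfolding q_def by (cases "0 < j") auto
      moreover have "\<not> (j = 0 \<and> l = n - 1)" using 4 unfolding q_def by auto
      moreover have "\<not> (j = n - 1 \<and> l = 0)" using 4 n unfolding p_def by auto
      ultimately show ?thesis using E 4 by auto
    qed
  qed
  have "(\<Sum>l<n. of_real (tmat n c s $$ (j,l)) * x l) =
     (\<Sum>l<n. (if l = j then of_real c * x j else 0) - (if l = p then of_real sp * x p else 0)
        - (if l = q then of_real sq * x q else 0))"
    by (rule sum.cong) (auto simp: e algebra_simps)
  also have "\<dots> = of_real c * x j - of_real sp * x p - of_real sq * x q"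
    using pn j by (simp add: sum_subtractf)
  finally show ?thesis by (simp add: p_def q_def sp_def sq_def)
qed

lemma cis_pm: "cis (a + b) + cis (a - b) = complex_of_real (2 * cos b) * cis a"
  by (simp add: complex_eq_iff cos_add cos_diff sin_add sin_diff)

lemma tmat_eigen:
  assumes n: "n \<ge> 3" and j: "j < n" and s: "cis (real n * t) = complex_of_real s" and s2: "s * s = 1"
  shows "(\<Sum>l<n. complex_of_real (tmat n c s $$ (j,l)) * cis (real l * t)) =
     complex_of_real (c - 2 * cos t) * cis (real j * t)"
proof -
  have a: "complex_of_real (if j + 1 < n then 1 else s) * cis (real (if j + 1 < n then j + 1 else 0) * t)
      = cis ((real j + 1) * t)"
  proof (cases "j + 1 < n")
    case False
    then have "real j + 1 = real n" using j by simp
    then show ?thesis using False s by simp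
  qed (simp add: algebra_simps)
  have b: "complex_of_real (if 0 < j then 1 else s) * cis (real (if 0 < j then j - 1 else n - 1) * t)
      = cis ((real j - 1) * t)"
  proof (cases "0 < j")
    case False
    then have j0: "j = 0" by simp
    have "real (n - 1) * t = real n * t + (- t)" using n by (simp add: of_nat_diff algebra_simps)
    moreover have "cis (real n * t + - t) = cis (real n * t) * cis (-t)" by (simp only: cis_mult)
    ultimately have "cis (real (n - 1) * t) = complex_of_real s * cis (- t)"
      by (simp only: s)
    then have "complex_of_real s * cis (real (n - 1) * t) = complex_of_real (s * s) * cis (-t)"
      by simp
    then show ?thesis using j0 s2 by simp
  qed (simp add: of_nat_diff algebra_simps)
  have "cis ((real j + 1) * t) + cis ((real j - 1) * t) = complex_of_real (2 * cos t) * cis (real j * t)"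
    using cis_pm[of "real j * t" t] by (simp add: algebra_simps)
  then show ?thesis
    unfolding tmat_row[OF n j] a b by (simp add: algebra_simps)
qed

lemma mult_entry:
  assumes "A \<in> carrier_mat n m" "B \<in> carrier_mat m p" "i < n" "j < p"
  shows "(A * B) $$ (i,j) = (\<Sum>l<m. A $$ (i,l) * B $$ (l,j))"
  using assms by (simp add: scalar_prod_def lessThan_atLeast0)

lemma tmat_dim[simp]: "dim_row (tmat n c s) = n" "dim_col (tmat n c s) = n"
  by (simp_all add: tmat_def)

definition th :: "nat \<Rightarrow> real \<Rightarrow> nat \<Rightarrow> real" where
  "th n \<phi> k = (2 * pi * real k + \<phi>) / real n"

definition Fm :: "nat \<Rightarrow> real \<Rightarrow> complex mat" where
  "Fm n \<phi> = mat n n (\<lambda>(l,k). cis (real l * th n \<phi> k))"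

definition Gm :: "nat \<Rightarrow> real \<Rightarrow> complex mat" where
  "Gm n \<phi> = mat n n (\<lambda>(k,l). cis (- (real l * th n \<phi> k)) / of_nat n)"

lemma Fm_dim[simp]: "dim_row (Fm n \<phi>) = n" "dim_col (Fm n \<phi>) = n" by (simp_all add: Fm_def)
lemma Gm_dim[simp]: "dim_row (Gm n \<phi>) = n" "dim_col (Gm n \<phi>) = n" by (simp_all add: Gm_def)
lemma dmat_dim[simp]: "dim_row (dmat n d) = n" "dim_col (dmat n d) = n" by (simp_all add: dmat_def)
lemma Fm_carrier[simp]: "Fm n \<phi> \<in> carrier_mat n n" by (simp add: Fm_def)
lemma Gm_carrier[simp]: "Gm n \<phi> \<in> carrier_mat n n" by (simp add: Gm_def)

lemma GF: assumes n: "n > 0" shows "Gm n \<phi> * Fm n \<phi> = 1\<^sub>m n"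
proof (rule eq_matI)
  fix k k' assume k: "k < dim_row (1\<^sub>m n :: complex mat)" and k': "k' < dim_col (1\<^sub>m n :: complex mat)"
  then have kn: "k < n" "k' < n" by auto
  have "(Gm n \<phi> * Fm n \<phi>) $$ (k,k') = (\<Sum>l<n. cis (- (real l * th n \<phi> k)) / of_nat n * cis (real l * th n \<phi> k'))"
    using kn by (subst mult_entry[of _ n n _ n]) (auto simp: Gm_def Fm_def)
  also have "\<dots> = (\<Sum>l<n. cis (real l * (2 * pi * of_int (int k' - int k) / real n))) / of_nat n"
    unfolding sum_divide_distrib
  proof (rule sum.cong[OF refl])
    fix l
    have "- (real l * th n \<phi> k) + real l * th n \<phi> k' = real l * (2 * pi * of_int (int k' - int k) / real n)"
      using n by (simp add: th_def field_simps)
    then show "cis (- (real l * th n \<phi> k)) / of_nat n * cis (real l * th n \<phi> k') =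
         cis (real l * (2 * pi * of_int (int k' - int k) / real n)) / of_nat n"
      by (metis cis_mult times_divide_eq_left)
  qed
  also have "\<dots> = 1\<^sub>m n $$ (k,k')"
    using kn n by (subst orth) auto
  finally show "(Gm n \<phi> * Fm n \<phi>) $$ (k,k') = 1\<^sub>m n $$ (k,k')" .
qed (auto simp: Gm_def Fm_def)

lemma th_cis: assumes n: "n > 0" and s: "cis \<phi> = complex_of_real s"
  shows "cis (real n * th n \<phi> k) = complex_of_real s"
proof -
  have "real n * th n \<phi> k = \<phi> + 2 * pi * real k" using n by (simp add: th_def field_simps)
  moreover have "cis (\<phi> + 2 * pi * real k) = cis \<phi> * cis (2 * pi * real k)" by (simp only: cis_mult)
  ultimately have "cis (real n * th n \<phi> k) = cis \<phi> * cis (2 * pi * real k)" by simp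
  also have "cis (2 * pi * real k) = 1" by (rule cis_multiple_2pi) simp
  finally show ?thesis using s by simp
qed

lemma AF: assumes n: "n \<ge> 3" and s: "cis \<phi> = complex_of_real s" and s2: "s * s = 1"
  shows "map_mat complex_of_real (tmat n c s) * Fm n \<phi> =
     Fm n \<phi> * dmat n (\<lambda>k. complex_of_real (c - 2 * cos (th n \<phi> k)))"
proof (rule eq_matI)
  fix j k assume "j < dim_row (Fm n \<phi> * dmat n (\<lambda>k. complex_of_real (c - 2 * cos (th n \<phi> k))))"
    "k < dim_col (Fm n \<phi> * dmat n (\<lambda>k. complex_of_real (c - 2 * cos (th n \<phi> k))))"
  then have jk: "j < n" "k < n" by (auto simp: dmat_def Fm_def)
  have "(map_mat complex_of_real (tmat n c s) * Fm n \<phi>) $$ (j,k) =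
     (\<Sum>l<n. complex_of_real (tmat n c s $$ (j,l)) * cis (real l * th n \<phi> k))"
    using jk by (subst mult_entry[of _ n n _ n]) (auto simp: Fm_def intro!: sum.cong)
  also have "\<dots> = complex_of_real (c - 2 * cos (th n \<phi> k)) * cis (real j * th n \<phi> k)"
    by (rule tmat_eigen[OF n jk(1) th_cis s2]) (use n s in auto)
  also have "\<dots> = (Fm n \<phi> * dmat n (\<lambda>k. complex_of_real (c - 2 * cos (th n \<phi> k)))) $$ (j,k)"
    using jk by (subst mult_entry[of _ n n _ n]) (auto simp: Fm_def dmat_def if_distrib cong: if_cong)
  finally show "(map_mat complex_of_real (tmat n c s) * Fm n \<phi>) $$ (j,k) =
     (Fm n \<phi> * dmat n (\<lambda>k. complex_of_real (c - 2 * cos (th n \<phi> k)))) $$ (j,k)" .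
qed (auto simp: dmat_def)

lemma tmat_charpoly: assumes n: "n \<ge> 3" and s: "cis \<phi> = complex_of_real s" and s2: "s * s = 1"
  shows "char_poly (tmat n c s) = (\<Prod>k\<leftarrow>[0..<n]. [:-(c - 2 * cos (th n \<phi> k)),1:])"
  apply (rule char_poly_real[OF tmat_carrier])
  apply (rule char_poly_diag_sim[OF _ Fm_carrier Gm_carrier GF AF[OF n s s2]])
  using n by auto

lemma edge_iff: fixes u v n :: nat shows
  "{u,v} \<in> mobius_edges n \<longleftrightarrow>
    ((\<exists>i. i + 1 < n \<and> {u,v} = {i, i+1}) \<or> (\<exists>i. i + 1 < n \<and> {u,v} = {n+i, n+i+1})
     \<or> (\<exists>i. i < n \<and> {u,v} = {i, n+i}) \<or> {u,v} = {0, 2*n - 1} \<or> {u,v} = {n, n - 1})"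
proof -
  have "{u,v} \<in> mobius_edges n \<longleftrightarrow>
    ((\<exists>i. {u,v} = {i, i+1} \<and> i + 1 < n) \<or> (\<exists>i. {u,v} = {n+i, n+i+1} \<and> i + 1 < n)
     \<or> (\<exists>i. {u,v} = {i, n+i} \<and> i < n) \<or> {u,v} = {0, 2*n - 1} \<or> {u,v} = {n, n - 1} \<or> False)"
    unfolding mobius_edges_def Un_iff mem_Collect_eq insert_iff empty_iff by (simp only: disj_assoc)
  then show ?thesis by (simp only: conj_commute simp_thms)
qed

lemma e1: fixes u v n :: nat shows "(\<exists>i. i + 1 < n \<and> {u,v} = {i, i+1}) \<longleftrightarrow> (u < n \<and> v < n \<and> (u + 1 = v \<or> v + 1 = u))"
proof
  assume "\<exists>i. i + 1 < n \<and> {u,v} = {i, i+1}"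
  then obtain i where "i + 1 < n" "{u,v} = {i, i+1}" by blast
  then show "u < n \<and> v < n \<and> (u + 1 = v \<or> v + 1 = u)" by (auto simp: doubleton_eq_iff)
next
  assume h: "u < n \<and> v < n \<and> (u + 1 = v \<or> v + 1 = u)"
  show "\<exists>i. i + 1 < n \<and> {u,v} = {i, i+1}"
  proof (cases "u + 1 = v")
    case True then show ?thesis using h by (intro exI[of _ u]) auto
  next
    case False then show ?thesis using h by (intro exI[of _ v]) auto
  qed
qed

lemma e2: fixes u v n :: nat shows "(\<exists>i. i + 1 < n \<and> {u,v} = {n+i, n+i+1}) \<longleftrightarrow> (n \<le> u \<and> n \<le> v \<and> u < 2*n \<and> v < 2*n \<and> (u + 1 = v \<or> v + 1 = u))"
proof
  assume "\<exists>i. i + 1 < n \<and> {u,v} = {n+i, n+i+1}"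
  then obtain i where "i + 1 < n" "{u,v} = {n+i, n+i+1}" by blast
  then show "n \<le> u \<and> n \<le> v \<and> u < 2*n \<and> v < 2*n \<and> (u + 1 = v \<or> v + 1 = u)" by (auto simp: doubleton_eq_iff)
next
  assume h: "n \<le> u \<and> n \<le> v \<and> u < 2*n \<and> v < 2*n \<and> (u + 1 = v \<or> v + 1 = u)"
  show "\<exists>i. i + 1 < n \<and> {u,v} = {n+i, n+i+1}"
  proof (cases "u + 1 = v")
    case True then show ?thesis using h by (intro exI[of _ "u - n"]) auto
  next
    case False then show ?thesis using h by (intro exI[of _ "v - n"]) auto
  qed
qed

lemma e3: fixes u v n :: nat shows "(\<exists>i. i < n \<and> {u,v} = {i, n+i}) \<longleftrightarrow> ((u < n \<and> v = u + n) \<or> (v < n \<and> u = v + n))"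
proof
  assume "\<exists>i. i < n \<and> {u,v} = {i, n+i}"
  then obtain i where "i < n" "{u,v} = {i, n+i}" by blast
  then show "(u < n \<and> v = u + n) \<or> (v < n \<and> u = v + n)" by (auto simp: doubleton_eq_iff)
next
  assume h: "(u < n \<and> v = u + n) \<or> (v < n \<and> u = v + n)"
  then show "\<exists>i. i < n \<and> {u,v} = {i, n+i}"
  proof
    assume "u < n \<and> v = u + n" then show ?thesis by (intro exI[of _ u]) auto
  next
    assume "v < n \<and> u = v + n" then show ?thesis by (intro exI[of _ v]) auto
  qed
qed

lemma adj_iff:
  fixes u v n :: nat
  shows "mobius_adj n u v \<longleftrightarrow> u \<noteq> v \<and>
    ((u < n \<and> v < n \<and> (u + 1 = v \<or> v + 1 = u)) \<or> (n \<le> u \<and> n \<le> v \<and> u < 2*n \<and> v < 2*n \<and> (u + 1 = v \<or> v + 1 = u))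
     \<or> ((u < n \<and> v = u + n) \<or> (v < n \<and> u = v + n)) \<or> (u = 0 \<and> v = 2*n - 1 \<or> u = 2*n - 1 \<and> v = 0)
     \<or> (u = n \<and> v = n - 1 \<or> u = n - 1 \<and> v = n))"
  unfolding mobius_adj_def edge_iff e1 e2 e3 unfolding doubleton_eq_iff by (rule refl)


lemma nb_lo: fixes n u w :: nat assumes n: "n \<ge> 3" and u: "u < n" and w: "w < 2*n"
  shows "mobius_adj n u w \<longleftrightarrow> (w = u + n \<or> w = (if u + 1 < n then u + 1 else n) \<or> w = (if 0 < u then u - 1 else 2*n - 1))"
  unfolding adj_iff using n u w by (cases "u = 0"; cases "u + 1 < n") auto

lemma nb_hi: fixes n u w :: nat assumes n: "n \<ge> 3" and u: "n \<le> u" "u < 2*n" and w: "w < 2*n"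
  shows "mobius_adj n u w \<longleftrightarrow> (w = u - n \<or> w = (if u + 1 < 2*n then u + 1 else 0) \<or> w = (if n < u then u - 1 else n - 1))"
  unfolding adj_iff using n u w by (cases "u = n"; cases "u + 1 < 2*n") auto

lemma card3: "a \<noteq> b \<Longrightarrow> a \<noteq> c \<Longrightarrow> b \<noteq> c \<Longrightarrow> card {w. w = a \<or> w = b \<or> w = c} = 3"
proof -
  assume "a \<noteq> b" "a \<noteq> c" "b \<noteq> c"
  moreover have "{w. w = a \<or> w = b \<or> w = c} = {a,b,c}" by auto
  ultimately show ?thesis by simp
qed

lemma deg: fixes n u :: nat assumes n: "n \<ge> 3" and u: "u < 2*n"
  shows "card {w. w < 2*n \<and> mobius_adj n u w} = 3"
proof (cases "u < n")
  case True
  let ?a = "u + n" and ?b = "if u + 1 < n then u + 1 else n" and ?c = "if 0 < u then u - 1 else 2*n - 1"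
  have "{w. w < 2*n \<and> mobius_adj n u w} = {w. w = ?a \<or> w = ?b \<or> w = ?c}"
    using nb_lo[OF n True] True n by auto
  also have "card \<dots> = 3" by (rule card3) (use True n in auto)
  finally show ?thesis .
next
  case False
  let ?a = "u - n" and ?b = "if u + 1 < 2*n then u + 1 else 0" and ?c = "if n < u then u - 1 else n - 1"
  have "{w. w < 2*n \<and> mobius_adj n u w} = {w. w = ?a \<or> w = ?b \<or> w = ?c}"
    using nb_hi[OF n _ u] False u n by auto
  also have "card \<dots> = 3" by (rule card3) (use False u n in auto)
  finally show ?thesis .
qed
definition Am :: "nat \<Rightarrow> real mat" where
  "Am n = mat n n (\<lambda>(i,j). if i = j then 3 else if j = i + 1 \<or> i = j + 1 then -1 else 0)"
definition Bm :: "nat \<Rightarrow> real mat" where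
  "Bm n = mat n n (\<lambda>(i,j). if i = j \<or> (i = 0 \<and> j = n - 1) \<or> (i = n - 1 \<and> j = 0) then -1 else 0)"
lemma Am_carrier[simp]: "Am n \<in> carrier_mat n n" by (simp add: Am_def)
lemma Bm_carrier[simp]: "Bm n \<in> carrier_mat n n" by (simp add: Bm_def)
lemma Am_dim[simp]: "dim_row (Am n) = n" "dim_col (Am n) = n" by (simp_all add: Am_def)
lemma Bm_dim[simp]: "dim_row (Bm n) = n" "dim_col (Bm n) = n" by (simp_all add: Bm_def)

lemma lap_block: assumes n: "n \<ge> 3"
  shows "mobius_laplacian n = four_block_mat (Am n) (Bm n) (Bm n) (Am n)"
proof (rule eq_matI)
  fix i j assume i: "i < dim_row (four_block_mat (Am n) (Bm n) (Bm n) (Am n))"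
    and j: "j < dim_col (four_block_mat (Am n) (Bm n) (Bm n) (Am n))"
  then have i2: "i < 2*n" and j2: "j < 2*n" by auto
  have L: "mobius_laplacian n $$ (i,j) = (if i = j then 3 else if mobius_adj n i j then -1 else 0)"
    using i2 j2 deg[OF n i2] by (auto simp: mobius_laplacian_def)
  show "mobius_laplacian n $$ (i,j) = four_block_mat (Am n) (Bm n) (Bm n) (Am n) $$ (i,j)"
  proof (cases "i < n")
    case True
    show ?thesis
    proof (cases "j < n")
      case True
      then show ?thesis using \<open>i < n\<close> n unfolding L adj_iff by (auto simp: Am_def)
    next
      case False
      then show ?thesis using \<open>i < n\<close> n j2 unfolding L adj_iff by (auto simp: Bm_def)
    qed
  next
    case False
    show ?thesis
    proof (cases "j < n")
      case True
      then show ?thesis using \<open>\<not> i < n\<close> n i2 unfolding L adj_iff by (auto simp: Bm_def)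
    next
      case False
      then show ?thesis using \<open>\<not> i < n\<close> n i2 j2 unfolding L adj_iff by (auto simp: Am_def)
    qed
  qed
qed (auto simp: mobius_laplacian_def)

lemma AB_plus: assumes n: "n \<ge> 3" shows "Am n + Bm n = tmat n 2 1"
  by (rule eq_matI) (use n in \<open>auto simp: Am_def Bm_def tmat_def\<close>)
lemma AB_minus: assumes n: "n \<ge> 3" shows "Am n - Bm n = tmat n 4 (-1)"
  by (rule eq_matI) (use n in \<open>auto simp: Am_def Bm_def tmat_def\<close>)
lemma LS_tmat: "L_S n = tmat n 4 (-1)"
  by (rule eq_matI) (auto simp: L_S_def tmat_def)

abbreviation cm :: "real mat \<Rightarrow> complex mat" where "cm \<equiv> map_mat complex_of_real"

lemma mm_gen: assumes A: "A \<in> carrier_mat n n" and B: "B \<in> carrier_mat n n" and F: "F \<in> carrier_mat n m"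
  and C: "C \<in> carrier_mat n n" and R: "R \<in> carrier_mat n m" and F': "F' \<in> carrier_mat n m"
  and h: "\<And>i j l. i < n \<Longrightarrow> j < m \<Longrightarrow> l < n \<Longrightarrow>
     of_real (A $$ (i,l)) * F $$ (l,j) + of_real (B $$ (i,l)) * F' $$ (l,j) = of_real (C $$ (i,l)) * F $$ (l,j)"
  and hR: "\<And>i j. i < n \<Longrightarrow> j < m \<Longrightarrow> R $$ (i,j) = (cm C * F) $$ (i,j)"
  shows "cm A * F + cm B * F' = R"
proof (rule eq_matI)
  fix i j assume "i < dim_row R" "j < dim_col R"
  then have ij: "i < n" "j < m" using R by auto
  have 1: "(cm A * F) $$ (i,j) = (\<Sum>l<n. cm A $$ (i,l) * F $$ (l,j))"
    by (rule mult_entry) (use A F ij in auto)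
  have 2: "(cm B * F') $$ (i,j) = (\<Sum>l<n. cm B $$ (i,l) * F' $$ (l,j))"
    by (rule mult_entry) (use B F' ij in auto)
  have 3: "(cm C * F) $$ (i,j) = (\<Sum>l<n. cm C $$ (i,l) * F $$ (l,j))"
    by (rule mult_entry) (use C F ij in auto)
  have "(cm A * F + cm B * F') $$ (i,j) = (cm A * F) $$ (i,j) + (cm B * F') $$ (i,j)"
    using ij A B F F' by simp
  also have "\<dots> = (\<Sum>l<n. cm C $$ (i,l) * F $$ (l,j))"
    unfolding 1 2 sum.distrib[symmetric]
    by (rule sum.cong[OF refl]) (use ij A B C h in auto)
  also have "\<dots> = R $$ (i,j)" using hR[OF ij] 3 by simp
  finally show "(cm A * F + cm B * F') $$ (i,j) = R $$ (i,j)" .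
qed (use A B F F' R in auto)

lemma mm_add: assumes A: "A \<in> carrier_mat n n" and B: "B \<in> carrier_mat n n" and F: "F \<in> carrier_mat n m"
  shows "cm A * F + cm B * F = cm (A + B) * F"
  by (rule mm_gen[OF A B F _ _ F, of "A + B"]) (use A B F in \<open>auto simp: algebra_simps\<close>)

lemma mm_sub: assumes A: "A \<in> carrier_mat n n" and B: "B \<in> carrier_mat n n" and F: "F \<in> carrier_mat n m"
  shows "cm A * F + cm B * (- F) = cm (A - B) * F"
  by (rule mm_gen[OF A B F, of "A - B"]) (use A B F in \<open>auto simp: algebra_simps\<close>)

lemma mm_sub2: assumes A: "A \<in> carrier_mat n n" and B: "B \<in> carrier_mat n n" and F: "F \<in> carrier_mat n m"
  shows "cm B * F + cm A * (- F) = - (cm (A - B) * F)"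
proof -
  have "cm B * F + cm A * (- F) = cm (B - A) * F"
    by (rule mm_sub[OF B A F])
  also have "\<dots> = - (cm (A - B) * F)"
  proof (rule eq_matI)
    fix i j assume "i < dim_row (- (cm (A - B) * F))" "j < dim_col (- (cm (A - B) * F))"
    then have ij: "i < n" "j < m" using A B F by auto
    have 1: "(cm (B - A) * F) $$ (i,j) = (\<Sum>l<n. cm (B - A) $$ (i,l) * F $$ (l,j))"
      by (rule mult_entry) (use A B F ij in auto)
    have 2: "(cm (A - B) * F) $$ (i,j) = (\<Sum>l<n. cm (A - B) $$ (i,l) * F $$ (l,j))"
      by (rule mult_entry) (use A B F ij in auto)
    have "(- (cm (A - B) * F)) $$ (i,j) = - (cm (A - B) * F) $$ (i,j)" using ij A B F by simp
    then show "(cm (B - A) * F) $$ (i,j) = (- (cm (A - B) * F)) $$ (i,j)"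
      unfolding 1 2 using ij A B by (simp add: sum_negf[symmetric] algebra_simps)
  qed (use A B F in auto)
  finally show ?thesis .
qed

lemma half_one: assumes G: "G \<in> carrier_mat n n" and F: "F \<in> carrier_mat n n" and GF: "G * F = 1\<^sub>m n"
  shows "((1/2 :: complex) \<cdot>\<^sub>m G) * F + ((1/2) \<cdot>\<^sub>m G) * F = 1\<^sub>m n"
proof -
  have "((1/2 :: complex) \<cdot>\<^sub>m G) * F = (1/2) \<cdot>\<^sub>m 1\<^sub>m n"
    using mult_smult_assoc_mat[OF G F] GF by simp
  then show ?thesis by (intro eq_matI) auto
qed

lemma add_neg_mat: "(X :: 'a :: ab_group_add mat) \<in> carrier_mat n m \<Longrightarrow> X + - X = 0\<^sub>m n m"
  by (intro eq_matI) auto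

lemma half_zero: assumes G: "G \<in> carrier_mat n n" and F: "F \<in> carrier_mat n n"
  shows "((1/2 :: complex) \<cdot>\<^sub>m G) * F + ((1/2) \<cdot>\<^sub>m G) * (- F) = 0\<^sub>m n n"
    "((1/2 :: complex) \<cdot>\<^sub>m G) * F + (- ((1/2) \<cdot>\<^sub>m G)) * F = 0\<^sub>m n n"
proof -
  have d: "dim_col ((1/2 :: complex) \<cdot>\<^sub>m G) = dim_row F" using G F by simp
  have d2: "dim_col (- ((1/2 :: complex) \<cdot>\<^sub>m G)) = dim_row F" using G F by simp
  have c: "((1/2 :: complex) \<cdot>\<^sub>m G) * F \<in> carrier_mat n n"
    using mult_carrier_mat[of "(1/2::complex) \<cdot>\<^sub>m G" n n F n] G F by simp
  show "((1/2 :: complex) \<cdot>\<^sub>m G) * F + ((1/2) \<cdot>\<^sub>m G) * (- F) = 0\<^sub>m n n"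
    unfolding uminus_mult_right_mat[OF d] by (rule add_neg_mat[OF c])
  show "((1/2 :: complex) \<cdot>\<^sub>m G) * F + (- ((1/2) \<cdot>\<^sub>m G)) * F = 0\<^sub>m n n"
    unfolding uminus_mult_left_mat[OF d] by (rule add_neg_mat[OF c])
qed

lemma half_one2: assumes G: "G \<in> carrier_mat n n" and F: "F \<in> carrier_mat n n" and GF: "G * F = 1\<^sub>m n"
  shows "((1/2 :: complex) \<cdot>\<^sub>m G) * F + (- ((1/2) \<cdot>\<^sub>m G)) * (- F) = 1\<^sub>m n"
proof -
  have d: "dim_col ((1/2 :: complex) \<cdot>\<^sub>m G) = dim_row (- F)" using G F by simp
  have d2: "dim_col ((1/2 :: complex) \<cdot>\<^sub>m G) = dim_row F" using G F by simp
  have "(- ((1/2 :: complex) \<cdot>\<^sub>m G)) * (- F) = ((1/2) \<cdot>\<^sub>m G) * F"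
    unfolding uminus_mult_left_mat[OF d] uminus_mult_right_mat[OF d2] by simp
  then show ?thesis using half_one[OF G F GF] by simp
qed

definition dd :: "nat \<Rightarrow> nat \<Rightarrow> real" where
  "dd n k = (if k < n then 2 - 2 * cos (th n 0 k) else 4 - 2 * cos (th n pi (k - n)))"

lemma L_charpoly: assumes n: "n \<ge> 3"
  shows "char_poly (mobius_laplacian n) = (\<Prod>k\<leftarrow>[0..<n+n]. [:-dd n k, 1:])"
proof -
  define F1 where "F1 = Fm n 0"
  define F2 where "F2 = Fm n pi"
  define H1 where "H1 = (1/2 :: complex) \<cdot>\<^sub>m Gm n 0"
  define H2 where "H2 = (1/2 :: complex) \<cdot>\<^sub>m Gm n pi"
  define D1 where "D1 = dmat n (\<lambda>k. complex_of_real (2 - 2 * cos (th n 0 k)))"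
  define D2 where "D2 = dmat n (\<lambda>k. complex_of_real (4 - 2 * cos (th n pi k)))"
  define W where "W = four_block_mat F1 F2 F1 (- F2)"
  define V where "V = four_block_mat H1 H1 H2 (- H2)"
  have n0: "n > 0" using n by simp
  have c[simp]: "F1 \<in> carrier_mat n n" "F2 \<in> carrier_mat n n" "H1 \<in> carrier_mat n n" "H2 \<in> carrier_mat n n"
    "D1 \<in> carrier_mat n n" "D2 \<in> carrier_mat n n" "- F2 \<in> carrier_mat n n" "- H2 \<in> carrier_mat n n"
    by (auto simp: F1_def F2_def H1_def H2_def D1_def D2_def dmat_def)
  have Lc: "mobius_laplacian n \<in> carrier_mat (n+n) (n+n)"
    unfolding lap_block[OF n] by simp
  have cL: "cm (mobius_laplacian n) = four_block_mat (cm (Am n)) (cm (Bm n)) (cm (Bm n)) (cm (Am n))"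
    unfolding lap_block[OF n] by (rule map_four_block_mat) auto
  have cA: "cm (Am n) \<in> carrier_mat n n" "cm (Bm n) \<in> carrier_mat n n" by auto
  have AF1: "cm (tmat n 2 1) * F1 = F1 * D1"
    unfolding F1_def D1_def by (rule AF[OF n]) auto
  have AF2: "cm (tmat n 4 (-1)) * F2 = F2 * D2"
    unfolding F2_def D2_def by (rule AF[OF n]) auto
  have GF1: "Gm n 0 * F1 = 1\<^sub>m n" unfolding F1_def by (rule GF[OF n0])
  have GF2: "Gm n pi * F2 = 1\<^sub>m n" unfolding F2_def by (rule GF[OF n0])
  have VW: "V * W = 1\<^sub>m (n+n)"
    unfolding V_def W_def
    apply (subst mult_four_block_mat[OF c(3) c(3) c(4) c(8) c(1) c(2) c(1) c(7)])
    unfolding H1_def H2_def half_one[OF Gm_carrier c(1) GF1] half_one2[OF Gm_carrier c(2) GF2]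
      half_zero(1)[OF Gm_carrier c(2)] half_zero(2)[OF Gm_carrier c(1)] by simp
  have DD: "four_block_mat D1 (0\<^sub>m n n) (0\<^sub>m n n) D2 = dmat (n+n) (\<lambda>k. complex_of_real (dd n k))"
    by (rule eq_matI) (auto simp: D1_def D2_def dmat_def dd_def)
  have BA: "cm (Bm n) * F1 + cm (Am n) * F1 = cm (Am n + Bm n) * F1"
    by (rule mm_gen[OF Bm_carrier Am_carrier c(1) _ _ c(1), of "Am n + Bm n"])
      (auto simp: algebra_simps intro!: mult_carrier_mat[of _ n n _ n])
  have LW: "cm (mobius_laplacian n) * W = W * dmat (n+n) (\<lambda>k. complex_of_real (dd n k))"
  proof -
    have "cm (mobius_laplacian n) * W = four_block_mat
       (cm (Am n) * F1 + cm (Bm n) * F1) (cm (Am n) * F2 + cm (Bm n) * (- F2))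
       (cm (Bm n) * F1 + cm (Am n) * F1) (cm (Bm n) * F2 + cm (Am n) * (- F2))"
      unfolding cL W_def by (rule mult_four_block_mat[OF cA(1) cA(2) cA(2) cA(1) c(1) c(2) c(1) c(7)])
    also have "\<dots> = four_block_mat (F1 * D1) (F2 * D2) (F1 * D1) (- (F2 * D2))"
      using AF1 AF2 AB_plus[OF n] AB_minus[OF n] BA
      by (simp add: mm_add[OF Am_carrier Bm_carrier c(1)] mm_sub[OF Am_carrier Bm_carrier c(2)] mm_sub2[OF Am_carrier Bm_carrier c(2)] add.commute)
    also have "\<dots> = W * four_block_mat D1 (0\<^sub>m n n) (0\<^sub>m n n) D2"
      unfolding W_def
    proof (subst mult_four_block_mat[OF c(1) c(2) c(1) c(7) c(5) zero_carrier_mat zero_carrier_mat c(6)])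
      have dm: "dim_col F1 = n" "dim_col F2 = n" "dim_row D2 = n" "dim_row F1 = n" "dim_row F2 = n"
        by (auto simp: F1_def F2_def D2_def)
      have cc: "F1 * D1 \<in> carrier_mat n n" "F2 * D2 \<in> carrier_mat n n"
        "- (F2 * D2) \<in> carrier_mat n n"
        using c by (auto intro!: mult_carrier_mat[of _ n n _ n])
      have "- F2 * D2 = - (F2 * D2)" by (rule uminus_mult_left_mat) (use dm in simp)
      then show "four_block_mat (F1 * D1) (F2 * D2) (F1 * D1) (- (F2 * D2)) =
        four_block_mat (F1 * D1 + F2 * 0\<^sub>m n n) (F1 * 0\<^sub>m n n + F2 * D2)
         (F1 * D1 + - F2 * 0\<^sub>m n n) (F1 * 0\<^sub>m n n + - F2 * D2)"
        using dm cc by simp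
    qed
    finally show ?thesis unfolding DD .
  qed
  have "char_poly (cm (mobius_laplacian n)) = (\<Prod>k\<leftarrow>[0..<n+n]. [:- complex_of_real (dd n k), 1:])"
    by (rule char_poly_diag_sim[OF _ _ _ VW LW]) (use Lc in \<open>auto simp: W_def V_def\<close>)
  then show ?thesis by (rule char_poly_real[OF Lc])
qed

lemma sum_lin: "(\<Sum>l<n. real l) = real n * (real n - 1) / 2"
  by (induct n) (auto simp: field_simps)

lemma sum_sq: "(\<Sum>l<n. real l ^ 2) = real n * (real n - 1) * (2 * real n - 1) / 6"
  by (induct n) (auto simp: field_simps power2_eq_square)

lemma sum_quad: "(\<Sum>l<n. real l * (real n - real l)) = real n * (real n ^ 2 - 1) / 6"
proof -
  have "(\<Sum>l<n. real l * (real n - real l)) = real n * (\<Sum>l<n. real l) - (\<Sum>l<n. real l ^ 2)"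
    by (simp add: sum_distrib_left sum_subtractf algebra_simps power2_eq_square)
  also have "\<dots> = real n * (real n ^ 2 - 1) / 6"
    unfolding sum_lin sum_sq by (simp add: field_simps power2_eq_square)
  finally show ?thesis .
qed

definition zz :: "nat \<Rightarrow> nat \<Rightarrow> real" where
  "zz n l = - (real l * (real n - real l)) / (2 * real n)"

lemma Cz: assumes n: "n \<ge> 3" and j: "j < n"
  shows "(\<Sum>l<n. tmat n 2 1 $$ (j,l) * zz n l) = (if j = 0 then 1 else 0) - 1 / real n"
proof -
  have "(\<Sum>l<n. tmat n 2 1 $$ (j,l) * zz n l) = (\<Sum>l<n. of_real (tmat n 2 1 $$ (j,l)) * zz n l)"
    by simp
  also have "\<dots> = 2 * zz n j - zz n (if j + 1 < n then j + 1 else 0) - zz n (if 0 < j then j - 1 else n - 1)"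
    unfolding tmat_row[OF n j] by simp
  also have "\<dots> = (if j = 0 then 1 else 0) - 1 / real n"
  proof -
    have nr: "real n > 0" using n by simp
    consider "j = 0" | "0 < j" "j + 1 < n" | "0 < j" "j + 1 = n" using j by linarith
    then show ?thesis
    proof cases
      case 1 then show ?thesis using n nr by (simp add: zz_def of_nat_diff field_simps)
    next
      case 2 then show ?thesis using n nr by (simp add: zz_def of_nat_diff field_simps)
    next
      case 3
      then have jn: "real j = real n - 1" by linarith
      show ?thesis using 3 n nr by (simp add: zz_def of_nat_diff jn field_simps)
    qed
  qed
  finally show ?thesis .
qed

lemma orth_neg: assumes n: "n > 0" and k: "k < n"
  shows "(\<Sum>j<n. cis (- (real j * th n 0 k))) = (if k = 0 then of_nat n else 0)"
proof -
  have "(\<Sum>j<n. cis (- (real j * th n 0 k))) = (\<Sum>j<n. cis (real j * (2 * pi * of_int (- int k) / real n)))"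
    by (rule sum.cong) (auto simp: th_def)
  also have "\<dots> = (if - int k = 0 then of_nat n else 0)" by (rule orth) (use n k in auto)
  finally show ?thesis by simp
qed

lemma orth_neg2: assumes n: "n > 0" and l: "l < n"
  shows "(\<Sum>k<n. cis (- (real l * th n 0 k))) = (if l = 0 then of_nat n else 0)"
proof -
  have "(\<Sum>k<n. cis (- (real l * th n 0 k))) = (\<Sum>k<n. cis (- (real k * th n 0 l)))"
    by (rule sum.cong) (simp_all add: th_def ac_simps)
  then show ?thesis using orth_neg[OF n l] by simp
qed

definition ww :: "nat \<Rightarrow> nat \<Rightarrow> complex" where
  "ww n k = (\<Sum>l<n. cis (- (real l * th n 0 k)) * complex_of_real (zz n l))"

lemma ww_eq: assumes n: "n \<ge> 3" and k: "0 < k" "k < n"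
  shows "complex_of_real (2 - 2 * cos (th n 0 k)) * ww n k = 1"
proof -
  have n0: "n > 0" using n by simp
  have one: "(\<Sum>j<n. (if j = 0 then 1 else 0) :: complex) = 1" using n0 by simp
  define S where "S = (\<Sum>j<n. cis (- (real j * th n 0 k)) * complex_of_real (\<Sum>l<n. tmat n 2 1 $$ (j,l) * zz n l))"
  have "S = (\<Sum>j<n. cis (- (real j * th n 0 k)) * complex_of_real ((if j = 0 then 1 else 0) - 1 / real n))"
    unfolding S_def by (rule sum.cong) (use n in \<open>auto simp: Cz\<close>)
  also have "\<dots> = (\<Sum>j<n. (if j = 0 then 1 else 0) - cis (- (real j * th n 0 k)) / of_nat n)"
    by (rule sum.cong) (auto simp: field_simps)
  also have "\<dots> = (\<Sum>j<n. (if j = 0 then 1 else 0)) - (\<Sum>j<n. cis (- (real j * th n 0 k))) / of_nat n"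
    by (simp add: sum_subtractf sum_divide_distrib)
  also have "\<dots> = 1" using orth_neg[OF n0 k(2)] k n0 one by simp
  finally have S1: "S = 1" .
  have cisn: "cis (real n * (- th n 0 k)) = complex_of_real 1"
  proof -
    have "real n * (- th n 0 k) = 2 * pi * of_int (- int k)" using n0 by (simp add: th_def)
    then show ?thesis by (simp del: of_int_minus)
  qed
  have "S = (\<Sum>j<n. \<Sum>l<n. complex_of_real (zz n l) * (complex_of_real (tmat n 2 1 $$ (l,j)) * cis (real j * (- th n 0 k))))"
    unfolding S_def of_real_sum sum_distrib_left
    by (intro sum.cong refl) (auto simp: tmat_sym algebra_simps)
  also have "\<dots> = (\<Sum>l<n. complex_of_real (zz n l) * (\<Sum>j<n. complex_of_real (tmat n 2 1 $$ (l,j)) * cis (real j * (- th n 0 k))))"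
    by (subst sum.swap) (simp add: sum_distrib_left)
  also have "\<dots> = (\<Sum>l<n. complex_of_real (zz n l) * (complex_of_real (2 - 2 * cos (- th n 0 k)) * cis (real l * (- th n 0 k))))"
    by (intro sum.cong refl, subst tmat_eigen[OF n _ cisn]) auto
  also have "\<dots> = complex_of_real (2 - 2 * cos (th n 0 k)) * ww n k"
    unfolding ww_def sum_distrib_left by (intro sum.cong refl) (simp add: algebra_simps)
  finally show ?thesis using S1 by simp
qed

lemma ww_sum: assumes n: "n \<ge> 3" shows "(\<Sum>k<n. ww n k) = 0"
proof -
  have n0: "n > 0" using n by simp
  have "(\<Sum>k<n. ww n k) = (\<Sum>l<n. complex_of_real (zz n l) * (\<Sum>k<n. cis (- (real l * th n 0 k))))"
    unfolding ww_def by (subst sum.swap) (simp add: sum_distrib_left algebra_simps)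
  also have "\<dots> = (\<Sum>l<n. complex_of_real (zz n l) * (if l = 0 then of_nat n else 0))"
    by (intro sum.cong refl) (simp add: orth_neg2[OF n0])
  also have "\<dots> = 0" by (simp add: zz_def if_distrib cong: if_cong)
  finally show ?thesis .
qed

lemma ww0: assumes n: "n \<ge> 3" shows "ww n 0 = - complex_of_real ((real n ^ 2 - 1) / 12)"
proof -
  have "ww n 0 = complex_of_real (\<Sum>l<n. zz n l)" by (simp add: ww_def th_def)
  also have "(\<Sum>l<n. zz n l) = - (\<Sum>l<n. real l * (real n - real l)) / (2 * real n)"
    unfolding zz_def by (simp add: sum_divide_distrib sum_negf)
  also have "\<dots> = - ((real n ^ 2 - 1) / 12)" unfolding sum_quad using n by (simp add: field_simps)
  finally show ?thesis by simp
qed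

lemma trig_sum: assumes n: "n \<ge> 3"
  shows "(\<Sum>k\<in>{1..<n}. 1 / (2 - 2 * cos (th n 0 k))) = (real n ^ 2 - 1) / 12"
proof -
  have dnz: "2 - 2 * cos (th n 0 k) \<noteq> 0" if "k \<in> {1..<n}" for k
    using ww_eq[OF n, of k] that by auto
  have "complex_of_real (\<Sum>k\<in>{1..<n}. 1 / (2 - 2 * cos (th n 0 k))) = (\<Sum>k\<in>{1..<n}. ww n k)"
    unfolding of_real_sum
  proof (rule sum.cong[OF refl])
    fix k assume k: "k \<in> {1..<n}"
    have "complex_of_real (2 - 2 * cos (th n 0 k)) * ww n k = 1" using ww_eq[OF n, of k] k by auto
    then show "complex_of_real (1 / (2 - 2 * cos (th n 0 k))) = ww n k"
      using dnz[OF k] by (simp add: field_simps)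
  qed
  also have "\<dots> = (\<Sum>k<n. ww n k) - ww n 0"
  proof -
    have "{..<n} = insert 0 {1..<n}" using n by auto
    then show ?thesis by simp
  qed
  also have "\<dots> = complex_of_real ((real n ^ 2 - 1) / 12)" using ww_sum[OF n] ww0[OF n] by simp
  finally show ?thesis by (simp only: of_real_eq_iff)
qed

lemma insort0: "(\<forall>x\<in>set ys. (0::real) < x) \<Longrightarrow> insort 0 ys = 0 # ys"
  by (cases ys) auto

lemma sum_list_sort: "sum_list (map (f :: real \<Rightarrow> real) (sort xs)) = sum_list (map f xs)"
  by (simp only: sum_mset_sum_list[symmetric] mset_map mset_sort)

theorem lemma3p1:
  fixes n :: nat
  assumes "n \<ge> 3"
  shows "\<exists>\<beta>s :: real list. length \<beta>s = n \<and>
           char_poly (L_S n) = (\<Prod>b\<leftarrow>\<beta>s. [:-b, 1:]) \<and>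
           (\<forall>b\<in>set \<beta>s. b > 0) \<and>
           kirchhoff_index (mobius_laplacian n) =
             (real n ^ 3 - real n) / 6 + 2 * real n * (\<Sum>b\<leftarrow>\<beta>s. 1 / b)"
proof -
  have n: "n \<ge> 3" by fact
  define \<beta>s where "\<beta>s = map (\<lambda>k. 4 - 2 * cos (th n pi k)) [0..<n]"
  have len: "length \<beta>s = n" by (simp add: \<beta>s_def)
  have cpS: "char_poly (L_S n) = (\<Prod>b\<leftarrow>\<beta>s. [:-b, 1:])"
    unfolding LS_tmat \<beta>s_def using tmat_charpoly[OF n, of pi "-1" 4] by (simp add: o_def)
  have pos: "\<forall>b\<in>set \<beta>s. b > 0"
    unfolding \<beta>s_def using cos_le_one by (auto simp: algebra_simps) (smt (verit) cos_le_one)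
  define rest where "rest = map (dd n) [1..<n+n]"
  have Lc: "mobius_laplacian n \<in> carrier_mat (n+n) (n+n)"
    unfolding lap_block[OF n] by simp
  have se: "sorted_eigenvalues (mobius_laplacian n) = sort (map (dd n) [0..<n+n])"
    by (rule sorted_eig[OF Lc]) (use L_charpoly[OF n] in \<open>auto simp: o_def\<close>)
  have dd0: "dd n 0 = 0" using n by (simp add: dd_def th_def)
  have xs: "map (dd n) [0..<n+n] = 0 # rest"
    unfolding rest_def using n dd0 by (simp add: upt_conv_Cons)
  have restpos: "\<forall>x\<in>set rest. 0 < x"
  proof
    fix x assume "x \<in> set rest"
    then obtain k where k: "1 \<le> k" "k < n + n" and x: "x = dd n k" by (auto simp: rest_def)
    show "0 < x"
    proof (cases "k < n")
      case True
      have "complex_of_real (2 - 2 * cos (th n 0 k)) * ww n k = 1" using ww_eq[OF n, of k] True k by auto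
      then have "2 - 2 * cos (th n 0 k) \<noteq> 0" by auto
      moreover have "cos (th n 0 k) \<le> 1" by simp
      ultimately have "cos (th n 0 k) < 1" by linarith
      then show ?thesis using True x by (simp add: dd_def)
    next
      case False
      have c: "cos (th n pi (k - n)) \<le> 1" by simp
      have "x = 4 - 2 * cos (th n pi (k - n))" using x False by (simp add: dd_def)
      then show ?thesis using c by linarith
    qed
  qed
  have tl: "tl (sorted_eigenvalues (mobius_laplacian n)) = sort rest"
    unfolding se xs using insort0[of "sort rest"] restpos by simp
  have dimL: "dim_row (mobius_laplacian n) = n + n" using Lc by simp
  have "(\<Sum>m\<leftarrow>rest. 1 / m) = (\<Sum>k\<in>{1..<n+n}. 1 / dd n k)"
    using sum_set_upt_conv_sum_list_nat[of "\<lambda>k. 1 / dd n k" 1 "n+n"] by (simp add: rest_def o_def)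
  also have "\<dots> = (\<Sum>k\<in>{1..<n}. 1 / dd n k) + (\<Sum>k\<in>{n..<n+n}. 1 / dd n k)"
    using n by (simp add: sum.atLeastLessThan_concat)
  also have "(\<Sum>k\<in>{1..<n}. 1 / dd n k) = (\<Sum>k\<in>{1..<n}. 1 / (2 - 2 * cos (th n 0 k)))"
    by (rule sum.cong) (auto simp: dd_def)
  also have "\<dots> = (real n ^ 2 - 1) / 12" by (rule trig_sum[OF n])
  also have "(\<Sum>k\<in>{n..<n+n}. 1 / dd n k) = (\<Sum>k\<in>{0..<n}. 1 / dd n (k + n))"
    using sum.shift_bounds_nat_ivl[of "\<lambda>k. 1 / dd n k" 0 n n] by simp
  also have "\<dots> = (\<Sum>b\<leftarrow>\<beta>s. 1 / b)"
  proof -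
    have "(\<Sum>k\<in>{0..<n}. 1 / dd n (k + n)) = (\<Sum>k\<in>{0..<n}. 1 / (4 - 2 * cos (th n pi k)))"
      by (rule sum.cong) (auto simp: dd_def)
    also have "\<dots> = (\<Sum>b\<leftarrow>\<beta>s. 1 / b)"
      using sum_set_upt_conv_sum_list_nat[of "\<lambda>k. 1 / (4 - 2 * cos (th n pi k))" 0 n]
      by (simp add: \<beta>s_def o_def)
    finally show ?thesis .
  qed
  finally have S: "(\<Sum>m\<leftarrow>rest. 1 / m) = (real n ^ 2 - 1) / 12 + (\<Sum>b\<leftarrow>\<beta>s. 1 / b)" .
  have "kirchhoff_index (mobius_laplacian n) = real (n + n) * (\<Sum>m\<leftarrow>rest. 1 / m)"
    unfolding kirchhoff_index_def dimL tl sum_list_sort ..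
  also have "\<dots> = (real n ^ 3 - real n) / 6 + 2 * real n * (\<Sum>b\<leftarrow>\<beta>s. 1 / b)"
    unfolding S by (simp add: field_simps power2_eq_square power3_eq_cube)
  finally show ?thesis using len cpS pos by blast
qed

end
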